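(* Assume the Axiom of Choice. Let $X,Y$ be nonempty sets and $F\colon X^*\to Y$ a function. Suppose there exist an associative $\varepsilon$-standard operation $H\colon X^*\to X\cup\{\varepsilon\}$ and a one-to-one function $f\colon\mathrm{ran}(H^{\flat})\to Y$ such that $F^{\flat}=f\circ H^{\flat}$. Then the following are equivalent: (i) $F_1$ is one-to-one; (ii) $H_1$ is one-to-one; (iii) $H_1$ is the identity map on $X$.
   Context: $X^*=\bigcup_{n\geqslant 0}X^n$ is the set of finite tuples over $X$, $X^0=\{\varepsilon\}$ with $\varepsilon\notin X$ the empty tuple; concatenation with $\varepsilon$ leaves tuples unchanged. $F_n=F|_{X^n}$, $F^{\flat}=F|_{X^*\setminus\{\varepsilon\}}$. An operation $H\colon X^*\to X\cup\{\varepsilon\}$ is $\varepsilon$-standard if $H(\varepsilon)=\varepsilon$ and $H(\mathbf{x})=\varepsilon$ only for $\mathbf{x}=\varepsilon$. $H$ is associative if $H(\mathbf{x},\mathbf{y},\mathbf{z})=H(\mathbf{x},H(\mathbf{y}),\mathbf{z})$ for all $\mathbf{x},\mathbf{y},\mathbf{z}\in X^*$ (arguments denote concatenation; a value $\varepsilon$ is treated as the empty tuple). *)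

theory Defs
  imports Main
begin

text \<open>The
  codomain X \<union> {\<epsilon>} is modelled by 'a option, with None playing the role of \<epsilon>.\<close>

definition eps_tuple :: "'a option \<Rightarrow> 'a list" where
  "eps_tuple v = (case v of None \<Rightarrow> [] | Some x \<Rightarrow> [x])"

definition eps_standard :: "'a set \<Rightarrow> ('a list \<Rightarrow> 'a option) \<Rightarrow> bool" where
  "eps_standard X H \<longleftrightarrow> H [] = None \<and> (\<forall>xs\<in>lists X. H xs = None \<longrightarrow> xs = [])"

definition associative_op :: "'a set \<Rightarrow> ('a list \<Rightarrow> 'a option) \<Rightarrow> bool" where
  "associative_op X H \<longleftrightarrow>
     (\<forall>xs\<in>lists X. \<forall>ys\<in>lists X. \<forall>zs\<in>lists X.
        H (xs @ ys @ zs) = H (xs @ eps_tuple (H ys) @ zs))"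

definition operation_on :: "'a set \<Rightarrow> ('a list \<Rightarrow> 'a option) \<Rightarrow> bool" where
  "operation_on X H \<longleftrightarrow> (\<forall>xs\<in>lists X. H xs \<in> Some ` X \<union> {None})"

end

theory Submission
  imports Defs
begin

theorem proposition4p4:
  fixes X :: "'a set" and Y :: "'b set"
    and F :: "'a list \<Rightarrow> 'b" and H :: "'a list \<Rightarrow> 'a option" and f :: "'a option \<Rightarrow> 'b"
  assumes "X \<noteq> {}" and "Y \<noteq> {}"
    and "\<forall>xs\<in>lists X. F xs \<in> Y"
    and "operation_on X H" and "associative_op X H" and "eps_standard X H"
    and "inj_on f (H ` (lists X - {[]}))" and "f ` H ` (lists X - {[]}) \<subseteq> Y"
    and "\<forall>xs\<in>lists X - {[]}. F xs = f (H xs)"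
  shows "(inj_on (\<lambda>x. F [x]) X \<longleftrightarrow> inj_on (\<lambda>x. H [x]) X)
       \<and> (inj_on (\<lambda>x. H [x]) X \<longleftrightarrow> (\<forall>x\<in>X. H [x] = Some x))"
proof -
  have Fx: "F [x] = f (H [x])" if "x \<in> X" for x using assms(9) that by auto
  have mem: "H [x] \<in> H ` (lists X - {[]})" if "x \<in> X" for x using that by auto
  have some: "\<exists>y\<in>X. H [x] = Some y" if "x \<in> X" for x
  proof -
    have "H [x] \<in> Some ` X \<union> {None}" using assms(4) that unfolding operation_on_def by auto
    moreover have "H [x] \<noteq> None" using assms(6) that unfolding eps_standard_def by auto
    ultimately show ?thesis by auto
  qed
  have idem: "H [x] = H [y]" if "x \<in> X" "H [x] = Some y" for x y
  proof -
    have "H ([] @ [x] @ []) = H ([] @ eps_tuple (H [x]) @ [])"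
      using assms(5) that(1) unfolding associative_op_def by (metis lists.simps empty_subsetI insert_subset list.set(1) list.set(2) lists_eq_set)
    then show ?thesis using that(2) by (simp add: eps_tuple_def)
  qed
  have 1: "inj_on (\<lambda>x. F [x]) X \<longleftrightarrow> inj_on (\<lambda>x. H [x]) X"
  proof
    assume "inj_on (\<lambda>x. F [x]) X"
    then show "inj_on (\<lambda>x. H [x]) X" unfolding inj_on_def using Fx by metis
  next
    assume a: "inj_on (\<lambda>x. H [x]) X"
    show "inj_on (\<lambda>x. F [x]) X" unfolding inj_on_def
    proof (intro ballI impI)
      fix x y assume "x \<in> X" "y \<in> X" "F [x] = F [y]"
      then have "H [x] = H [y]" using Fx mem assms(7) unfolding inj_on_def by metis
      then show "x = y" using a \<open>x \<in> X\<close> \<open>y \<in> X\<close> unfolding inj_on_def by blast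
    qed
  qed
  have 2: "inj_on (\<lambda>x. H [x]) X \<longleftrightarrow> (\<forall>x\<in>X. H [x] = Some x)"
  proof
    assume a: "inj_on (\<lambda>x. H [x]) X"
    show "\<forall>x\<in>X. H [x] = Some x"
    proof
      fix x assume x: "x \<in> X"
      then obtain y where y: "y \<in> X" "H [x] = Some y" using some by blast
      then have "H [x] = H [y]" using idem x by blast
      then have "x = y" using a x y(1) unfolding inj_on_def by blast
      then show "H [x] = Some x" using y by simp
    qed
  next
    assume "\<forall>x\<in>X. H [x] = Some x"
    then show "inj_on (\<lambda>x. H [x]) X" unfolding inj_on_def by auto
  qed
  show ?thesis using 1 2 by blast
qed

end
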